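(* The following hold: $$\alpha(4)=1,\qquad \alpha(3)\ge \tfrac12,\qquad \beta(4)\ge \tfrac13,\qquad \beta(3)\ge \tfrac14.$$
   Context: A set $S$ of positive integers is called $n$-free if its elements can be arranged in a sequence, each element appearing exactly once, that contains no $n$-term arithmetic progression as a subsequence. The sequence is a finite permutation if $S$ is finite, and a sequence indexed by the positive integers if $S$ is infinite. A sequence contains an $n$-term arithmetic progression as a subsequence if there are positions $i_1<\cdots<i_n$ whose entries satisfy $a_{i_{m+1}}-a_{i_m}=d$ for all $m$, for some fixed $d\ne0$ (positive or negative). For $S\subseteq\mathbb{Z}_{>0}$, let $A(n)=|S\cap[1,n]|$. The upper density is $\overline{d}(S)=\limsup_{n\to\infty}A(n)/n$ and the lower density is $\underline{d}(S)=\liminf_{n\to\infty}A(n)/n$. For $n\ge3$, define $$\alpha(n)=\sup\{\overline{d}(S): S \text{ is } n\text{-free}\},\qquad \beta(n)=\sup\{\underline{d}(S): S \text{ is } n\text{-free}\}.$$ *)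

theory Defs
  imports Complex_Main "HOL-Library.Extended_Real"
begin

definition has_AP_subseq :: "(nat \<Rightarrow> int) \<Rightarrow> nat set \<Rightarrow> nat \<Rightarrow> bool" where
  "has_AP_subseq a I n \<longleftrightarrow>
     (\<exists>i :: nat \<Rightarrow> nat. \<exists>d :: int. d \<noteq> 0 \<and>
        (\<forall>m<n. i m \<in> I) \<and>
        (\<forall>m. m + 1 < n \<longrightarrow> i m < i (m + 1) \<and> a (i (m + 1)) - a (i m) = d))"

definition n_free :: "nat \<Rightarrow> nat set \<Rightarrow> bool" where
  "n_free n S \<longleftrightarrow>
     (finite S \<and> (\<exists>xs. distinct xs \<and> set xs = S \<and>
                    \<not> has_AP_subseq (\<lambda>k. int (xs ! k)) {..<length xs} n))
   \<or> (infinite S \<and> (\<exists>a :: nat \<Rightarrow> nat. bij_betw a UNIV S \<and>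
                    \<not> has_AP_subseq (\<lambda>k. int (a k)) UNIV n))"

definition counting :: "nat set \<Rightarrow> nat \<Rightarrow> nat" where
  "counting S n = card (S \<inter> {1..n})"

definition upper_density :: "nat set \<Rightarrow> ereal" where
  "upper_density S = limsup (\<lambda>n. ereal (real (counting S n) / real n))"

definition lower_density :: "nat set \<Rightarrow> ereal" where
  "lower_density S = liminf (\<lambda>n. ereal (real (counting S n) / real n))"

definition alpha :: "nat \<Rightarrow> ereal" where
  "alpha n = Sup {upper_density S | S. S \<subseteq> {1..} \<and> n_free n S}"

definition beta :: "nat \<Rightarrow> ereal" where
  "beta n = Sup {lower_density S | S. S \<subseteq> {1..} \<and> n_free n S}"

end

theory Submission
  imports Defs "HOL-Library.Infinite_Set"
begin


fun rv :: "nat \<Rightarrow> nat \<Rightarrow> nat" where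
  "rv 0 x = 0"
| "rv (Suc W) x = (x mod 2) * 2^W + rv W (x div 2)"

lemma rv_less: "rv W x < 2^W"
proof (induction W arbitrary: x)
  case 0 then show ?case by simp
next
  case (Suc W)
  have "x mod 2 = 0 \<or> x mod 2 = 1" by auto
  with Suc[of "x div 2"] show ?case by auto
qed

lemma rv_inj: "x < 2^W \<Longrightarrow> y < 2^W \<Longrightarrow> rv W x = rv W y \<Longrightarrow> x = y"
proof (induction W arbitrary: x y)
  case 0 then show ?case by simp
next
  case (Suc W)
  have a: "rv W (x div 2) < 2^W" "rv W (y div 2) < 2^W" by (rule rv_less)+
  have m: "x mod 2 = 0 \<or> x mod 2 = 1" "y mod 2 = 0 \<or> y mod 2 = 1" by auto
  from Suc.prems(3) have e: "(x mod 2) * 2^W + rv W (x div 2) = (y mod 2) * 2^W + rv W (y div 2)" by simp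
  have xy: "x mod 2 = y mod 2" using e a m by auto
  then have "rv W (x div 2) = rv W (y div 2)" using e by simp
  moreover have "x div 2 < 2^W" "y div 2 < 2^W" using Suc.prems by auto
  ultimately have "x div 2 = y div 2" using Suc.IH by blast
  with xy show ?case by (metis div_mult_mod_eq)
qed

lemma par1: "(x::nat) + z = 2*y \<Longrightarrow> x mod 2 = z mod 2" 
  by (metis dvd_triv_left even_add mod2_eq_if)

lemma par2: "(x::nat) + z = 2*y \<Longrightarrow> y mod 2 = x mod 2 \<Longrightarrow> x mod 2 = z mod 2 \<Longrightarrow> x div 2 + z div 2 = 2 * (y div 2)"
proof -
  assume a: "x + z = 2*y" "y mod 2 = x mod 2" "x mod 2 = z mod 2"
  have "x = 2*(x div 2) + x mod 2" "z = 2*(z div 2) + z mod 2" "y = 2*(y div 2) + y mod 2" by simp_all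
  then have "2*(x div 2) + 2*(z div 2) + 2*(x mod 2) = 2*(2*(y div 2)) + 2 * (x mod 2)" using a by linarith
  then show ?thesis by linarith
qed

lemma rv_ap: "x < 2^W \<Longrightarrow> y < 2^W \<Longrightarrow> z < 2^W \<Longrightarrow> x + z = 2*y \<Longrightarrow> x \<noteq> z
   \<Longrightarrow> rv W x < rv W y \<Longrightarrow> rv W y < rv W z \<Longrightarrow> False"
proof (induction W arbitrary: x y z)
  case 0 then show ?case by simp
next
  case (Suc W)
  have a: "rv W (x div 2) < 2^W" "rv W (y div 2) < 2^W" "rv W (z div 2) < 2^W" by (rule rv_less)+
  have xz: "x mod 2 = z mod 2" using Suc.prems(4) by (rule par1)
  show ?case
  proof (cases "y mod 2 = x mod 2")
    case True
    have h: "x div 2 + z div 2 = 2 * (y div 2)" using Suc.prems(4) True xz by (rule par2)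
    have h2: "x div 2 \<noteq> z div 2" using xz Suc.prems(5) by (metis div_mult_mod_eq)
    have "rv W (x div 2) < rv W (y div 2)" "rv W (y div 2) < rv W (z div 2)"
      using Suc.prems(6,7) True xz by simp_all
    moreover have "x div 2 < 2^W" "y div 2 < 2^W" "z div 2 < 2^W" using Suc.prems(1-3) by auto
    ultimately show ?thesis using Suc.IH h h2 by blast
  next
    case False
    have p6: "x mod 2 * 2 ^ W + rv W (x div 2) < y mod 2 * 2 ^ W + rv W (y div 2)"
      using Suc.prems(6) by simp
    have p7: "y mod 2 * 2 ^ W + rv W (y div 2) < z mod 2 * 2 ^ W + rv W (z div 2)"
      using Suc.prems(7) by simp
    show ?thesis
    proof (cases "x mod 2 = 0")
      case True
      then have "y mod 2 = 1" "z mod 2 = 0" using False xz by auto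
      then show ?thesis using p7 a by simp
    next
      case c: False
      then have "x mod 2 = 1" "y mod 2 = 0" using False by auto
      then show ?thesis using p6 a by simp
    qed
  qed
qed

lemma counting_add:
  assumes "p < a" "b \<le> n" "{a..b} \<subseteq> T" "a \<le> b"
  shows "counting T p + (Suc b - a) \<le> counting T n"
proof -
  have sub: "(T \<inter> {1..p}) \<union> {a..b} \<subseteq> T \<inter> {1..n}" using assms by auto
  have disj: "(T \<inter> {1..p}) \<inter> {a..b} = {}" using assms by auto
  have "card ((T \<inter> {1..p}) \<union> {a..b}) = card (T \<inter> {1..p}) + card {a..b}"
    using disj by (intro card_Un_disjoint) auto
  also have "card {a..b} = Suc b - a" by simp
  finally have "card ((T \<inter> {1..p}) \<union> {a..b}) = counting T p + (Suc b - a)"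
    unfolding counting_def .
  moreover have "card ((T \<inter> {1..p}) \<union> {a..b}) \<le> card (T \<inter> {1..n})"
    using sub by (intro card_mono) auto
  ultimately show ?thesis unfolding counting_def by simp
qed

lemma counting_le: "counting T n \<le> n"
proof -
  have "card (T \<inter> {1..n}) \<le> card {1..n}" by (intro card_mono) auto
  then show ?thesis unfolding counting_def by simp
qed



locale blocks =
  fixes A B :: "nat \<Rightarrow> nat"
  assumes AB: "\<And>k. A k \<le> B k"
    and gap: "\<And>k. 2 * B k < A (Suc k)"
    and A0: "1 \<le> A 0"
begin

definition S where "S = {s. \<exists>k. A k \<le> s \<and> s \<le> B k}"
definition blk where "blk s = (LEAST k. s \<le> B k)"
definition code where "code s = 2^(B (blk s)) + rv (B (blk s)) s"

lemma smA: "strict_mono A"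
  unfolding strict_mono_Suc_iff proof
  fix n show "A n < A (Suc n)" using AB[of n] gap[of n] by linarith
qed

lemma smB: "strict_mono B"
  unfolding strict_mono_Suc_iff proof
  fix n show "B n < B (Suc n)" using AB[of "Suc n"] gap[of n] by linarith
qed

lemma Bless: "j < k \<Longrightarrow> B j < A k"
proof -
  assume "j < k"
  then have "A (Suc j) \<le> A k" using smA by (simp add: strict_mono_less_eq)
  moreover have "B j < A (Suc j)" using gap[of j] by simp
  ultimately show ?thesis by simp
qed

lemma blk_eq: "A k \<le> s \<Longrightarrow> s \<le> B k \<Longrightarrow> blk s = k"
  unfolding blk_def
proof (rule Least_equality)
  assume "A k \<le> s" "s \<le> B k"
  then show "s \<le> B k" by simp
  fix j assume "s \<le> B j"
  show "k \<le> j"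
  proof (rule ccontr)
    assume "\<not> k \<le> j"
    then have "B j < A k" by (intro Bless) simp
    with \<open>s \<le> B j\<close> \<open>A k \<le> s\<close> show False by simp
  qed
qed

lemma inS: "s \<in> S \<Longrightarrow> A (blk s) \<le> s \<and> s \<le> B (blk s)"
  unfolding S_def using blk_eq by auto

lemma S_pos: "S \<subseteq> {1..}"
proof
  fix s assume "s \<in> S"
  then obtain k where "A k \<le> s" unfolding S_def by auto
  moreover have "A 0 \<le> A k" using smA by (simp add: strict_mono_less_eq)
  ultimately show "s \<in> {1..}" using A0 by simp
qed

lemma blk_val: "x \<in> S \<Longrightarrow> y \<in> S \<Longrightarrow> blk x < blk y \<Longrightarrow> x < y"
  using inS[of x] inS[of y] Bless[of "blk x" "blk y"] by simp

lemma code_lt: "x \<in> S \<Longrightarrow> blk x < blk y \<Longrightarrow> code x < code y"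
proof -
  assume "blk x < blk y"
  then have "B (blk x) < B (blk y)" using smB by (simp add: strict_mono_less)
  then have "(2::nat)^(Suc (B (blk x))) \<le> 2^(B (blk y))" by (intro power_increasing) auto
  moreover have "code x < 2^(Suc (B (blk x)))"
    unfolding code_def using rv_less[of "B (blk x)" x] by simp
  ultimately show ?thesis unfolding code_def by simp
qed

lemma code_blk: "x \<in> S \<Longrightarrow> y \<in> S \<Longrightarrow> code x < code y \<Longrightarrow> blk x \<le> blk y"
  using code_lt[of y x] by force

lemma in_pow: "x \<in> S \<Longrightarrow> x < 2^(B (blk x))"
  using inS[of x] less_exp[of "B (blk x)"] by (meson le_less_trans)

lemma inj_code: "inj_on code S"
proof (rule inj_onI)
  fix x y assume xy: "x \<in> S" "y \<in> S" "code x = code y"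
  have "blk x = blk y" using code_lt[of x y] code_lt[of y x] xy by (metis less_irrefl nat_neq_iff)
  then have "rv (B (blk x)) x = rv (B (blk x)) y" using xy(3) unfolding code_def by simp
  then show "x = y" using rv_inj in_pow xy \<open>blk x = blk y\<close> by metis
qed

lemma three:
  assumes xyz: "x \<in> S" "y \<in> S" "z \<in> S" and ap: "x + z = 2*y" "x \<noteq> z"
    and c: "code x < code y" "code y < code z"
  shows "blk y = blk z \<and> blk x < blk z"
proof -
  have b1: "blk x \<le> blk y" "blk y \<le> blk z" using code_blk c xyz by auto
  have b2: "blk x < blk z"
  proof (rule ccontr)
    assume "\<not> blk x < blk z"
    then have e: "blk x = blk y" "blk y = blk z" using b1 by auto
    have "rv (B (blk x)) x < rv (B (blk x)) y" "rv (B (blk x)) y < rv (B (blk x)) z"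
      using c e unfolding code_def by simp_all
    moreover have "x < 2^(B (blk x))" "y < 2^(B (blk x))" "z < 2^(B (blk x))" by (metis e in_pow xyz)+
    ultimately show False using rv_ap ap by blast
  qed
  define k where "k = blk z"
  have k1: "k = Suc (k - 1)" using b2 k_def by simp
  have "A k \<le> z" using inS[OF xyz(3)] k_def by simp
  then have "2 * B (k - 1) < 2 * y" using gap[of "k - 1"] k1 ap(1) by simp
  then have yb: "B (k - 1) < y" by simp
  have "blk y = k"
  proof (rule ccontr)
    assume "blk y \<noteq> k"
    then have "blk y \<le> k - 1" using b1 k_def by simp
    then have "B (blk y) \<le> B (k - 1)" using smB by (simp add: strict_mono_less_eq)
    with inS[OF xyz(2)] yb show False by simp
  qed
  then show ?thesis using b2 k_def by simp
qed

lemma infinite_S: "infinite S"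
proof -
  have "range A \<subseteq> S" unfolding S_def using AB by auto
  moreover have "infinite (range A)"
    using smA by (intro range_inj_infinite) (rule strict_mono_imp_inj_on)
  ultimately show ?thesis using infinite_super by blast
qed

definition arr where "arr = inv_into S code \<circ> enumerate (code ` S)"

lemma inf_C: "infinite (code ` S)"
  using infinite_S inj_code finite_imageD by blast

lemma arr_bij: "bij_betw arr UNIV S"
  unfolding arr_def
  using bij_betw_trans[OF bij_enumerate[OF inf_C] bij_betw_inv_into[OF inj_on_imp_bij_betw[OF inj_code]]] .

lemma arr_in: "arr i \<in> S"
  using arr_bij bij_betwE by blast

lemma code_arr: "code (arr i) = enumerate (code ` S) i"
  unfolding arr_def using enumerate_in_set[OF inf_C] by (simp add: f_inv_into_f)

lemma code_arr_mono: "i < j \<Longrightarrow> code (arr i) < code (arr j)"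
  unfolding code_arr using enumerate_mono[OF _ inf_C] by blast

lemma ap_triple:
  assumes "i0 < i1" "i1 < i2" "int (arr i1) - int (arr i0) = d" "int (arr i2) - int (arr i1) = d" "d \<noteq> 0"
  shows "blk (arr i1) = blk (arr i2) \<and> blk (arr i0) < blk (arr i2)"
proof (rule three[OF arr_in arr_in arr_in])
  show "arr i0 + arr i2 = 2 * arr i1" using assms(3,4) by linarith
  show "arr i0 \<noteq> arr i2" using assms(3,4,5) by linarith
  show "code (arr i0) < code (arr i1)" "code (arr i1) < code (arr i2)" using assms code_arr_mono by auto
qed

lemma no_ap4: "\<not> has_AP_subseq (\<lambda>k. int (arr k)) UNIV 4"
proof
  assume "has_AP_subseq (\<lambda>k. int (arr k)) UNIV 4"
  then obtain i :: "nat \<Rightarrow> nat" and d :: int where d: "d \<noteq> 0"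
    and h: "\<forall>m. m + 1 < 4 \<longrightarrow> i m < i (m + 1) \<and> int (arr (i (m + 1))) - int (arr (i m)) = d"
    unfolding has_AP_subseq_def by blast
  have h0: "i 0 < i 1" "int (arr (i 1)) - int (arr (i 0)) = d" using h[rule_format, of 0] by (auto simp: numeral_2_eq_2)
  have h1: "i 1 < i 2" "int (arr (i 2)) - int (arr (i 1)) = d" using h[rule_format, of 1] by (auto simp: numeral_2_eq_2)
  have h2: "i 2 < i 3" "int (arr (i 3)) - int (arr (i 2)) = d" using h[rule_format, of 2] by (auto simp: numeral_2_eq_2 numeral_3_eq_3)
  have "blk (arr (i 1)) = blk (arr (i 2))" using ap_triple[OF h0(1) h1(1) h0(2) h1(2) d] by simp
  moreover have "blk (arr (i 2)) = blk (arr (i 3)) \<and> blk (arr (i 1)) < blk (arr (i 3))"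
    using ap_triple[OF h1(1) h2(1) h1(2) h2(2) d] by simp
  ultimately show False by simp
qed

lemma free4: "n_free 4 S"
  unfolding n_free_def using infinite_S arr_bij no_ap4 by blast

lemma free3:
  assumes g3: "\<And>k. B (Suc k) + B k < 2 * A (Suc k)"
  shows "n_free 3 S"
proof -
  have "\<not> has_AP_subseq (\<lambda>k. int (arr k)) UNIV 3"
  proof
    assume "has_AP_subseq (\<lambda>k. int (arr k)) UNIV 3"
    then obtain i :: "nat \<Rightarrow> nat" and d :: int where d: "d \<noteq> 0"
      and h: "\<forall>m. m + 1 < 3 \<longrightarrow> i m < i (m + 1) \<and> int (arr (i (m + 1))) - int (arr (i m)) = d"
      unfolding has_AP_subseq_def by blast
    have h0: "i 0 < i 1" "int (arr (i 1)) - int (arr (i 0)) = d" using h[rule_format, of 0] by (auto simp: numeral_2_eq_2)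
    have h1: "i 1 < i 2" "int (arr (i 2)) - int (arr (i 1)) = d" using h[rule_format, of 1] by (auto simp: numeral_2_eq_2)
    define x where "x = arr (i 0)"
    define y where "y = arr (i 1)"
    define z where "z = arr (i 2)"
    have t: "blk y = blk z" "blk x < blk z" using ap_triple[OF h0(1) h1(1) h0(2) h1(2) d] x_def y_def z_def by auto
    have ap: "x + z = 2 * y" using h0(2) h1(2) x_def y_def z_def by linarith
    define k where "k = blk z"
    have k1: "k = Suc (k - 1)" using t k_def by simp
    have "A k \<le> y" "z \<le> B k" using inS[OF arr_in, of "i 1"] inS[OF arr_in, of "i 2"] t k_def y_def z_def by auto
    moreover have "B k + B (k - 1) < 2 * A k" using g3[of "k - 1"] k1 by simp
    ultimately have "B k + B (k - 1) < 2 * y" by linarith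
    then have "B (k - 1) < x" using ap \<open>z \<le> B k\<close> by linarith
    moreover have "blk x \<le> k - 1" using t k_def by simp
    then have "B (blk x) \<le> B (k - 1)" using smB by (simp add: strict_mono_less_eq)
    ultimately show False using inS[OF arr_in, of "i 0"] x_def by simp
  qed
  then show ?thesis unfolding n_free_def using infinite_S arr_bij by blast
qed

end



context blocks begin
lemma int_sub: "A k \<le> a \<Longrightarrow> b \<le> B k \<Longrightarrow> {a..b} \<subseteq> S"
proof
  fix x assume "A k \<le> a" "b \<le> B k" "x \<in> {a..b}"
  then show "x \<in> S" unfolding S_def by (intro CollectI exI[of _ k]) auto
qed
end

lemma ud_ge:
  assumes "\<And>N. \<exists>n\<ge>N. 0 < n \<and> v * real n \<le> real (counting T n)"
  shows "ereal v \<le> upper_density T"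
  unfolding upper_density_def limsup_INF_SUP
proof (rule INF_greatest)
  fix N :: nat
  obtain n where n: "n \<ge> N" "0 < n" "v * real n \<le> real (counting T n)" using assms by blast
  then have "v \<le> real (counting T n) / real n" by (simp add: pos_le_divide_eq)
  then have "ereal v \<le> ereal (real (counting T n) / real n)" by simp
  then show "ereal v \<le> (SUP m\<in>{N..}. ereal (real (counting T m) / real m))"
    using n(1) by (intro SUP_upper2[of n]) auto
qed

lemma ld_ge:
  assumes "\<And>n. 0 < n \<Longrightarrow> v * real n \<le> real (counting T n)"
  shows "ereal v \<le> lower_density T"
  unfolding lower_density_def
proof (rule Liminf_bounded)
  show "\<forall>\<^sub>F n in sequentially. ereal v \<le> ereal (real (counting T n) / real n)"
    unfolding eventually_sequentially
  proof (intro exI allI impI)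
    fix n :: nat assume "1 \<le> n"
    then have "v \<le> real (counting T n) / real n" using assms[of n] by (simp add: pos_le_divide_eq)
    then show "ereal v \<le> ereal (real (counting T n) / real n)" by simp
  qed
qed

lemma ud_le1: "upper_density T \<le> 1"
  unfolding upper_density_def
proof (rule Limsup_bounded)
  show "\<forall>\<^sub>F n in sequentially. ereal (real (counting T n) / real n) \<le> 1"
  proof (rule always_eventually, rule allI)
    fix n
    have "real (counting T n) \<le> real n" using counting_le[of T n] by simp
    then have "real (counting T n) / real n \<le> 1"
      by (cases "n = 0") (auto simp: divide_le_eq)
    then show "ereal (real (counting T n) / real n) \<le> 1" by simp
  qed
qed

lemma fam_blocks: "2 \<le> m \<Longrightarrow> blocks (\<lambda>k. (2*m)^k) (\<lambda>k. m*(2*m)^k - 1)"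
proof (unfold_locales)
  fix k assume m: "2 \<le> m"
  have p: "1 \<le> (2*m)^k" using m by simp
  show "(2*m)^k \<le> m*(2*m)^k - 1"
  proof -
    have "2 * (2*m)^k \<le> m*(2*m)^k" using m by simp
    then show ?thesis using p by linarith
  qed
  have "m*(2*m)^k \<ge> 1" using p m by (metis le_trans mult_le_mono1 one_le_numeral nat_mult_1)
  then show "2 * (m*(2*m)^k - 1) < (2*m)^(Suc k)" by simp
next
  show "1 \<le> (2*m)^0" by simp
qed



definition F :: "nat \<Rightarrow> nat set" where
  "F m = blocks.S (\<lambda>k. (2*m)^k) (\<lambda>k. m*(2*m)^k - 1)"

lemma F_free: "2 \<le> m \<Longrightarrow> n_free 4 (F m) \<and> F m \<subseteq> {1..}"
  unfolding F_def using blocks.free4[OF fam_blocks] blocks.S_pos[OF fam_blocks] by blast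

lemma F_ud: assumes m: "2 \<le> m" shows "ereal (1 - 1/real m) \<le> upper_density (F m)"
proof (rule ud_ge)
  interpret b: blocks "\<lambda>k. (2*m)^k" "\<lambda>k. m*(2*m)^k - 1" using fam_blocks[OF m] .
  fix N
  define p where "p = (2*m)^N"
  define n where "n = m*p - 1"
  have p1: "1 \<le> p" using m p_def by simp
  have pn: "p \<le> n" using b.AB[of N] p_def n_def by simp
  have "N < 2^N" by (rule less_exp)
  also have "(2::nat)^N \<le> p" unfolding p_def using m by (intro power_mono) auto
  finally have Nn: "N \<le> n" using pn by simp
  have SF: "b.S = F m" unfolding F_def ..
  have "{p..n} \<subseteq> b.S" by (rule b.int_sub[of N]) (simp_all add: p_def n_def)
  then have sub: "{p..n} \<subseteq> F m" using SF by simp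
  have "counting (F m) 0 + (Suc n - p) \<le> counting (F m) n"
    using counting_add[OF _ order.refl sub pn] p1 by simp
  then have c: "Suc n - p \<le> counting (F m) n" by simp
  have mp: "1 \<le> m * p" using p1 m by (metis le_trans mult_le_mono1 one_le_numeral nat_mult_1)
  have rn: "real n = real m * real p - 1" unfolding n_def using mp by (simp add: of_nat_diff)
  have rs: "real (Suc n - p) = real m * real p - real p" using pn rn by (simp add: of_nat_diff)
  have m0: "real m > 0" using m by simp
  have e: "(1 - 1/real m) * (real m * real p - 1) = real m * real p - real p - 1 + 1/real m"
    using m0 by (simp add: field_simps)
  have "1/real m \<le> 1" using m by simp
  moreover have "(1 - 1/real m) * real n = real m * real p - real p - 1 + 1/real m" using e rn by simp
  ultimately have "(1 - 1/real m) * real n \<le> real (Suc n - p)" using rs by linarith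
  also have "\<dots> \<le> real (counting (F m) n)" using c by simp
  finally show "\<exists>n\<ge>N. 0 < n \<and> (1 - 1 / real m) * real n \<le> real (counting (F m) n)"
    using Nn pn p1 by (intro exI[of _ n]) auto
qed

lemma F2_count: "\<forall>n < 4^k. n \<le> 3 * counting (F 2) n"
proof (induction k)
  case 0 then show ?case by simp
next
  case (Suc k)
  interpret b: blocks "\<lambda>k. (2*2)^k" "\<lambda>k. 2*(2*2)^k - 1" by (rule fam_blocks) simp
  have SF: "b.S = F 2" unfolding F_def ..
  show ?case
  proof (intro allI impI)
    fix n :: nat assume n: "n < 4^Suc k"
    define p :: nat where "p = 4^k"
    have p1: "1 \<le> p" using p_def by simp
    show "n \<le> 3 * counting (F 2) n"
    proof (cases "n < p")
      case True then show ?thesis using Suc.IH p_def by simp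
    next
      case False
      have c0: "p - 1 \<le> 3 * counting (F 2) (p - 1)" using Suc.IH p_def p1 by simp
      show ?thesis
      proof (cases "n \<le> 2*p - 1")
        case True
        have "{p..n} \<subseteq> b.S" by (rule b.int_sub[of k]) (use p_def True in simp_all)
        then have sub: "{p..n} \<subseteq> F 2" using SF by simp
        have "counting (F 2) (p - 1) + (Suc n - p) \<le> counting (F 2) n"
          using counting_add[OF _ order.refl sub] p1 False by simp
        then show ?thesis using c0 False p1 by linarith
      next
        case c2: False
        have "{p..2*p-1} \<subseteq> b.S" by (rule b.int_sub[of k]) (simp_all add: p_def)
        then have sub: "{p..2*p-1} \<subseteq> F 2" using SF by simp
        have "counting (F 2) (p - 1) + (Suc (2*p-1) - p) \<le> counting (F 2) n"
          using counting_add[OF _ _ sub] p1 c2 by simp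
        moreover have "n < 4 * p" using n p_def by simp
        ultimately show ?thesis using c0 p1 by linarith
      qed
    qed
  qed
qed

lemma F2_ld: "ereal (1/3) \<le> lower_density (F 2)"
proof (rule ld_ge)
  fix n :: nat assume "0 < n"
  have "(2::nat)^n \<le> 4^n" by (intro power_mono) auto
  then have "n < 4^n" using less_exp[of n] by linarith
  then have "n \<le> 3 * counting (F 2) n" using F2_count by blast
  then show "1/3 * real n \<le> real (counting (F 2) n)" by linarith
qed



definition T3 :: "nat set" where
  "T3 = blocks.S (\<lambda>k. 3^k) (\<lambda>k. 3*3^k div 2)"

lemma twoB: "2 * (3*3^k div 2) = 3*3^k - (1::nat)"
proof -
  have "odd (3*3^k :: nat)" by simp
  then show ?thesis by (rule odd_two_times_div_two_nat)
qed

lemma T3_blocks: "blocks (\<lambda>k. 3^k) (\<lambda>k. 3*3^k div 2)"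
proof (unfold_locales)
  fix k :: nat
  have p: "1 \<le> (3::nat)^k" by simp
  show "(3::nat)^k \<le> 3*3^k div 2" using twoB[of k] p by linarith
  show "2 * (3*3^k div 2) < (3::nat)^Suc k" using twoB[of k] p by simp
next
  show "1 \<le> (3::nat)^0" by simp
qed

lemma T3_free: "n_free 3 T3 \<and> T3 \<subseteq> {1..}"
proof -
  interpret b: blocks "\<lambda>k. 3^k" "\<lambda>k. 3*3^k div 2" by (rule T3_blocks)
  have "n_free 3 b.S"
  proof (rule b.free3)
    fix k :: nat
    have p: "1 \<le> (3::nat)^k" by simp
    have e1: "2 * (3*3^Suc k div 2) = 3*3^Suc k - (1::nat)" by (rule twoB)
    have e2: "2 * (3*3^k div 2) = 3*3^k - (1::nat)" by (rule twoB)
    have e3: "(3::nat)^Suc k = 3*3^k" by simp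
    show "3*3^Suc k div 2 + 3*3^k div 2 < 2 * (3::nat)^Suc k" using e1 e2 e3 p by linarith
  qed
  moreover have "b.S = T3" unfolding T3_def ..
  ultimately show ?thesis using b.S_pos by simp
qed

lemma T3_count: "\<forall>n < 3^k. n \<le> 4 * counting T3 n"
proof (induction k)
  case 0 then show ?case by simp
next
  case (Suc k)
  interpret b: blocks "\<lambda>k. 3^k" "\<lambda>k. 3*3^k div 2" by (rule T3_blocks)
  have SF: "b.S = T3" unfolding T3_def ..
  show ?case
  proof (intro allI impI)
    fix n :: nat assume n: "n < 3^Suc k"
    define p :: nat where "p = 3^k"
    define q :: nat where "q = 3*3^k div 2"
    have p1: "1 \<le> p" using p_def by simp
    have q2: "2 * q = 3 * p - 1" using twoB[of k] p_def q_def by simp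
    show "n \<le> 4 * counting T3 n"
    proof (cases "n < p")
      case True then show ?thesis using Suc.IH p_def by simp
    next
      case False
      have c0: "p - 1 \<le> 4 * counting T3 (p - 1)" using Suc.IH p_def p1 by simp
      show ?thesis
      proof (cases "n \<le> q")
        case True
        have "{p..n} \<subseteq> b.S" by (rule b.int_sub[of k]) (use p_def q_def True in simp_all)
        then have sub: "{p..n} \<subseteq> T3" using SF by simp
        have "counting T3 (p - 1) + (Suc n - p) \<le> counting T3 n"
          using counting_add[OF _ order.refl sub] p1 False by simp
        then show ?thesis using c0 False p1 by linarith
      next
        case c2: False
        have "{p..q} \<subseteq> b.S" by (rule b.int_sub[of k]) (simp_all add: p_def q_def)
        then have sub: "{p..q} \<subseteq> T3" using SF by simp
        have "counting T3 (p - 1) + (Suc q - p) \<le> counting T3 n"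
          using counting_add[OF _ _ sub] p1 c2 q2 by simp
        moreover have "n < 3 * p" using n p_def by simp
        ultimately show ?thesis using c0 p1 q2 c2 by linarith
      qed
    qed
  qed
qed

lemma T3_ld: "ereal (1/4) \<le> lower_density T3"
proof (rule ld_ge)
  fix n :: nat assume "0 < n"
  have "(2::nat)^n \<le> 3^n" by (intro power_mono) auto
  then have "n < 3^n" using less_exp[of n] by linarith
  then have "n \<le> 4 * counting T3 n" using T3_count by blast
  then show "1/4 * real n \<le> real (counting T3 n)" by linarith
qed

lemma T3_ud: "ereal (1/2) \<le> upper_density T3"
proof (rule ud_ge)
  interpret b: blocks "\<lambda>k. 3^k" "\<lambda>k. 3*3^k div 2" by (rule T3_blocks)
  have SF: "b.S = T3" unfolding T3_def ..
  fix N :: nat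
  define p :: nat where "p = 3^N"
  define q :: nat where "q = 3*3^N div 2"
  have p1: "1 \<le> p" using p_def by simp
  have q2: "2 * q = 3 * p - 1" using twoB[of N] p_def q_def by simp
  have "(2::nat)^N \<le> 3^N" by (intro power_mono) auto
  then have Np: "N < p" using less_exp[of N] p_def by linarith
  have c0: "p - 1 \<le> 4 * counting T3 (p - 1)" using T3_count[of N] p_def p1 by simp
  have "{p..q} \<subseteq> b.S" by (rule b.int_sub[of N]) (simp_all add: p_def q_def)
  then have sub: "{p..q} \<subseteq> T3" using SF by simp
  have "counting T3 (p - 1) + (Suc q - p) \<le> counting T3 q"
    using counting_add[OF _ order.refl sub] p1 q2 by simp
  then have "q \<le> 2 * counting T3 q" using c0 p1 q2 by linarith
  then have "1/2 * real q \<le> real (counting T3 q)" by linarith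
  then show "\<exists>n\<ge>N. 0 < n \<and> 1/2 * real n \<le> real (counting T3 n)"
    using Np p1 q2 by (intro exI[of _ q]) auto
qed



theorem theorem3:
  shows "alpha 4 = 1 \<and> alpha 3 \<ge> ereal (1/2) \<and> beta 4 \<ge> ereal (1/3) \<and> beta 3 \<ge> ereal (1/4)"
proof (intro conjI)
  have up: "alpha 4 \<le> 1" unfolding alpha_def
    by (rule Sup_least) (auto simp: ud_le1)
  have F_le: "upper_density (F m) \<le> alpha 4" if "2 \<le> m" for m
    unfolding alpha_def using F_free[OF that] by (intro Sup_upper) blast
  have lo: "1 \<le> alpha 4"
  proof (rule ereal_le_epsilon2)
    fix e :: real assume e: "0 < e"
    define m where "m = nat \<lceil>1/e\<rceil> + 2"
    have m2: "2 \<le> m" using m_def by simp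
    have "1/e < real m" using m_def by linarith
    then have "1 < e * real m" using e by (simp add: field_simps)
    then have me: "1 / real m < e" using m2 by (simp add: field_simps)
    have "ereal (1 - 1/real m) \<le> alpha 4" using F_ud[OF m2] F_le[OF m2] by (rule order.trans)
    then have "ereal (1 - 1/real m) + ereal e \<le> alpha 4 + ereal e" by (rule add_right_mono)
    moreover have "ereal 1 \<le> ereal (1 - 1/real m) + ereal e" using me by simp
    ultimately show "1 \<le> alpha 4 + ereal e" by (metis one_ereal_def order.trans)
  qed
  show "alpha 4 = 1" using up lo by (rule antisym)
  show "ereal (1/2) \<le> alpha 3"
    using T3_ud T3_free unfolding alpha_def by (blast intro: Sup_upper2)
  show "ereal (1/3) \<le> beta 4"
    using F2_ld F_free[of 2] unfolding beta_def by (blast intro: Sup_upper2)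
  show "ereal (1/4) \<le> beta 3"
    using T3_ld T3_free unfolding beta_def by (blast intro: Sup_upper2)
qed

end
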